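(* For every integer $n\ge1$, $$\sup_{0\ne f\in\mathcal{T}_n}\frac{|f(0)|}{\|f\|_{L_2[0,1]}} \ge n.$$
   Context: For an integer $n\ge1$, $\mathcal{T}_n$ denotes the set of all functions $f:\mathbb{R}\to\mathbb{C}$ of the form $f(t)=\sum_{j=1}^n a_j e^{i\lambda_j t}$ with $a_j\in\mathbb{C}$ (possibly zero) and real exponents $\lambda_1<\lambda_2<\cdots<\lambda_n$. $\|f\|_{L_2[0,1]}=(\int_0^1|f|^2)^{1/2}$. *)

theory Defs
  imports "HOL-Analysis.Analysis"
begin

text \<open>The class T_n of exponential sums with at most n terms and real frequencies
  lam_1 < ... < lam_n (coefficients may be zero).\<close>
definition exp_sums :: "nat \<Rightarrow> (real \<Rightarrow> complex) set" where
  "exp_sums n = {f. \<exists>(a::nat \<Rightarrow> complex) (lam::nat \<Rightarrow> real).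
      strict_mono_on {..<n} lam \<and>
      f = (\<lambda>t. \<Sum>j<n. a j * exp (\<i> * complex_of_real (lam j * t)))}"

definition L2_01 :: "(real \<Rightarrow> complex) \<Rightarrow> real" where
  "L2_01 f = sqrt (integral {0..1} (\<lambda>t. (cmod (f t))^2))"

end

theory Submission
  imports Defs "HOL-Computational_Algebra.Polynomial" "HOL-Probability.Characteristic_Functions"
begin


lemma findiff_zero:
  fixes Q :: "real poly"
  assumes "degree Q < n"
  shows "(\<Sum>k\<le>n. (-1)^k * real (n choose k) * poly Q (real k)) = 0"
  using assms
proof (induction n arbitrary: Q)
  case 0 then show ?case by simp
next
  case (Suc m)
  obtain c Q' where Q: "Q = pCons c Q'" by (cases Q) auto
  have alt: "(\<Sum>k\<le>Suc m. (-1)^k * real (Suc m choose k)) = 0"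
    using choose_alternating_sum[of "Suc m", where 'a=real] by simp
  have "(\<Sum>k\<le>Suc m. (-1)^k * real (Suc m choose k) * poly Q (real k))
      = c * (\<Sum>k\<le>Suc m. (-1)^k * real (Suc m choose k))
        + (\<Sum>k\<le>Suc m. (-1)^k * real (Suc m choose k) * real k * poly Q' (real k))"
    by (simp add: Q sum_distrib_left sum.distrib[symmetric] algebra_simps)
  also have "(\<Sum>k\<le>Suc m. (-1)^k * real (Suc m choose k) * real k * poly Q' (real k))
     = (\<Sum>k<Suc m. (-1)^(Suc k) * real (Suc m choose Suc k) * real (Suc k) * poly Q' (real (Suc k)))"
    by (subst sum.atMost_shift) simp
  also have "\<dots> = - real (Suc m) * (\<Sum>k\<le>m. (-1)^k * real (m choose k) * poly (pcompose Q' [:1,1:]) (real k))"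
  proof -
    have h: "\<And>k. real (Suc m choose Suc k) * real (Suc k) = real (Suc m) * real (m choose k)"
      using binomial_absorption by (metis diff_Suc_1 mult.commute of_nat_mult)
    have "\<And>k. (-1::real)^(Suc k) * real (Suc m choose Suc k) * real (Suc k) * poly Q' (real (Suc k))
        = - real (Suc m) * ((-1)^k * real (m choose k) * poly (pcompose Q' [:1,1:]) (real k))"
    proof -
      fix k
      have "(-1::real)^(Suc k) * real (Suc m choose Suc k) * real (Suc k) * poly Q' (real (Suc k))
          = - ((-1)^k * (real (Suc m choose Suc k) * real (Suc k)) * poly Q' (real (Suc k)))"
        by simp
      also have "\<dots> = - real (Suc m) * ((-1)^k * real (m choose k) * poly (pcompose Q' [:1,1:]) (real k))"
        unfolding h by (simp add: poly_pcompose algebra_simps)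
      finally show "?thesis k" .
    qed
    then show ?thesis
      by (simp only: sum_distrib_left lessThan_Suc_atMost)
  qed
  also have "(\<Sum>k\<le>m. (-1)^k * real (m choose k) * poly (pcompose Q' [:1,1:]) (real k)) = 0"
  proof (cases "Q' = 0")
    case True then show ?thesis by simp
  next
    case False
    then have "degree Q' < m" using Suc.prems Q by simp
    then show ?thesis by (intro Suc.IH) (simp add: degree_pcompose)
  qed
  finally show ?case using alt by simp
qed


definition cc :: "nat \<Rightarrow> nat \<Rightarrow> real" where
  "cc n j = (-1)^j * real n * real (n choose (j+1)) * real ((n+j) choose j)"

lemma fact_ratio: "real (fact (n+j)) = real (fact j) * (\<Prod>i\<in>{1..n}. real j + real i)"
proof (induction n)
  case 0 then show ?case by simp
next
  case (Suc n)
  have "{1..Suc n} = insert (Suc n) {1..n}" by auto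
  then have "(\<Prod>i\<in>{1..Suc n}. real j + real i) = (real j + real (Suc n)) * (\<Prod>i\<in>{1..n}. real j + real i)"
    by simp
  then show ?case using Suc by (simp add: algebra_simps)
qed

lemma binom_prod: "real ((n+j) choose j) = (\<Prod>i\<in>{1..n}. real j + real i) / fact n"
proof -
  have "real ((n+j) choose j) = fact (n+j) / (fact j * fact n)"
    by (simp add: binomial_fact)
  also have "\<dots> = (\<Prod>i\<in>{1..n}. real j + real i) / fact n"
    using fact_ratio[of n j] by (simp add: field_simps)
  finally show ?thesis .
qed

lemma prod_minus_one: "(\<Prod>i\<in>{2..n}. real i - 1) = fact (n - 1)"
proof (induction n)
  case 0 then show ?case by simp
next
  case (Suc n)
  show ?case
  proof (cases "n = 0")
    case True then show ?thesis by simp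
  next
    case False
    then have "{2..Suc n} = insert (Suc n) {2..n}" by auto
    then have "(\<Prod>i\<in>{2..Suc n}. real i - 1) = real n * (\<Prod>i\<in>{2..n}. real i - 1)" by simp
    also have "\<dots> = real n * fact (n - 1)" using Suc by simp
    also have "\<dots> = fact n" using False by (metis fact_num_eq_if of_nat_fact)
    finally show ?thesis by simp
  qed
qed

lemma key_identity:
  assumes "m < n"
  shows "(\<Sum>j<n. cc n j / (real j + real m + 1)) = (if m = 0 then 1 else 0)"
proof -
  define S where "S = {1..n} - {m+1}"
  have finS: "finite S" by (simp add: S_def)
  define Q :: "real poly" where "Q = smult (1 / fact n) (\<Prod>i\<in>S. [: real i - 1, 1 :])"
  have polyQ: "poly Q x = (\<Prod>i\<in>S. x + real i - 1) / fact n" for x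
    by (simp add: Q_def poly_prod algebra_simps)
  have "degree Q \<le> degree (\<Prod>i\<in>S. [: real i - 1, 1 :])"
    by (simp add: Q_def)
  also have "\<dots> \<le> sum (degree \<circ> (\<lambda>i. [: real i - 1, 1 :])) S"
    by (rule degree_prod_sum_le[OF finS])
  also have "\<dots> = card S" by simp
  also have "\<dots> = n - 1" using assms by (simp add: S_def)
  finally have degQ: "degree Q < n" using assms by linarith
  have split: "(\<Prod>i\<in>{1..n}. real j + real i) = (real j + real m + 1) * (\<Prod>i\<in>S. real j + real i)" for j
  proof -
    have "{1..n} = insert (m+1) S" using assms by (auto simp: S_def)
    moreover have "m + 1 \<notin> S" by (simp add: S_def)
    ultimately show ?thesis using finS by (simp add: algebra_simps)
  qed
  have trm: "cc n j / (real j + real m + 1) = - real n * ((-1)^(Suc j) * real (n choose Suc j) * poly Q (real (Suc j)))" for j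
  proof -
    have "cc n j / (real j + real m + 1) = (-1)^j * real n * real (n choose (j+1)) * ((\<Prod>i\<in>S. real j + real i) / fact n)"
    proof -
      have d: "real j + real m + 1 \<noteq> 0" by simp
      have "cc n j = (real j + real m + 1) * ((-1)^j * real n * real (n choose (j+1)) * ((\<Prod>i\<in>S. real j + real i) / fact n))"
        unfolding cc_def binom_prod split by (simp add: algebra_simps)
      then show ?thesis using d by simp
    qed
    also have "(\<Prod>i\<in>S. real j + real i) = (\<Prod>i\<in>S. real (Suc j) + real i - 1)"
      by (intro prod.cong) auto
    finally show ?thesis by (simp add: polyQ)
  qed
  have "(\<Sum>k\<le>n. (-1)^k * real (n choose k) * poly Q (real k)) = 0"
    by (rule findiff_zero[OF degQ])
  then have "poly Q 0 + (\<Sum>j<n. (-1)^(Suc j) * real (n choose Suc j) * poly Q (real (Suc j))) = 0"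
    by (simp add: sum.atMost_shift)
  then have "(\<Sum>j<n. cc n j / (real j + real m + 1)) = real n * poly Q 0"
    by (simp add: trm sum_distrib_left[symmetric] sum_negf)
  also have "\<dots> = (if m = 0 then 1 else 0)"
  proof (cases "m = 0")
    case True
    then have "S = {2..n}" by (auto simp: S_def)
    then have "poly Q 0 = fact (n - 1) / fact n" by (simp add: polyQ prod_minus_one)
    moreover have "fact n = real n * fact (n - 1)" using assms by (metis fact_num_eq_if gr_implies_not0)
    ultimately show ?thesis using True assms by simp
  next
    case False
    then have "1 \<in> S" using assms by (auto simp: S_def)
    then have "(\<Prod>i\<in>S. 0 + real i - 1) = 0" using finS
      by (intro prod_zero) (auto intro!: bexI[of _ 1])
    then show ?thesis using False by (simp add: polyQ)
  qed
  finally show ?thesis .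
qed


definition PP :: "nat \<Rightarrow> real \<Rightarrow> real" where
  "PP n t = (\<Sum>j<n. cc n j * t^j)"

lemma has_integral_pow01: "((\<lambda>t::real. t^k) has_integral (1 / (real k + 1))) {0..1}"
proof -
  have "((\<lambda>t::real. t^k) has_integral ((\<lambda>t. (1 / real (Suc k)) * t^(Suc k)) 1 - (\<lambda>t. (1 / real (Suc k)) * t^(Suc k)) 0)) {0..1}"
  proof (intro fundamental_theorem_of_calculus)
    fix x :: real
    have "((\<lambda>t. t^(Suc k)) has_real_derivative (real (Suc k) * x^k)) (at x within {0..1})"
      using DERIV_pow[of "Suc k" x] by (simp add: has_field_derivative_at_within)
    then have "((\<lambda>t. (1 / real (Suc k)) * t^(Suc k)) has_real_derivative ((1 / real (Suc k)) * (real (Suc k) * x^k))) (at x within {0..1})"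
      by (rule DERIV_cmult)
    then show "((\<lambda>t. (1 / real (Suc k)) * t^(Suc k)) has_vector_derivative x^k) (at x within {0..1})"
      by (simp add: has_real_derivative_iff_has_vector_derivative[symmetric] del: of_nat_Suc)
  qed simp
  then show ?thesis by (simp add: add.commute)
qed

lemma PP_sq_integral:
  assumes "n \<ge> 1"
  shows "((\<lambda>t. (PP n t)^2) has_integral (real n)^2) {0..1}"
proof -
  have eq: "(PP n t)^2 = (\<Sum>i<n. \<Sum>j<n. (cc n i * cc n j) * t^(j+i))" for t
    by (simp add: PP_def power2_eq_square sum_product power_add algebra_simps)
  have "((\<lambda>t. \<Sum>i<n. \<Sum>j<n. (cc n i * cc n j) * t^(j+i)) has_integral
        (\<Sum>i<n. \<Sum>j<n. (cc n i * cc n j) * (1 / (real (j+i) + 1)))) {0..1}"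
    by (intro has_integral_sum has_integral_mult_right has_integral_pow01 finite_lessThan)
  moreover have "(\<Sum>i<n. \<Sum>j<n. (cc n i * cc n j) * (1 / (real (j+i) + 1)))
      = (\<Sum>i<n. cc n i * (\<Sum>j<n. cc n j / (real j + real i + 1)))"
    by (simp add: sum_distrib_left algebra_simps)
  moreover have "\<dots> = (\<Sum>i<n. if i = 0 then cc n i else 0)"
    by (intro sum.cong refl) (simp add: key_identity)
  moreover have "\<dots> = cc n 0" using assms by (simp add: sum.delta)
  moreover have "cc n 0 = (real n)^2" by (simp add: cc_def power2_eq_square)
  ultimately show ?thesis unfolding eq by simp
qed


definition EE :: "real \<Rightarrow> real \<Rightarrow> complex" where
  "EE e t = (exp (\<i> * complex_of_real (e * t)) - 1) / (\<i> * complex_of_real e)"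

definition FF :: "nat \<Rightarrow> real \<Rightarrow> real \<Rightarrow> complex" where
  "FF n e t = (\<Sum>k<n. complex_of_real (cc n k) * EE e t ^ k)"

lemma EE_bounds:
  assumes e: "0 < e" and t: "0 \<le> t" "t \<le> 1"
  shows "cmod (EE e t) \<le> 1" "cmod (EE e t - complex_of_real t) \<le> e"
proof -
  have a0: "cmod (iexp (e*t) - 1) \<le> e * t"
    using iexp_approx1[of "e*t" 0] e t by simp
  have a1: "cmod (iexp (e*t) - (1 + \<i> * complex_of_real (e*t))) \<le> (e*t)^2 / 2"
    using iexp_approx1[of "e*t" 1] e t by (simp add: power2_eq_square)
  have ne: "cmod (\<i> * complex_of_real e) = e" using e by (simp add: norm_mult)
  have "cmod (EE e t) = cmod (iexp (e*t) - 1) / e"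
    unfolding EE_def by (simp add: norm_divide ne)
  also have "\<dots> \<le> (e * t) / e" using a0 e by (intro divide_right_mono) auto
  also have "\<dots> \<le> 1" using e t by simp
  finally show "cmod (EE e t) \<le> 1" .
  have "EE e t - complex_of_real t = (iexp (e*t) - (1 + \<i> * complex_of_real (e*t))) / (\<i> * complex_of_real e)"
    unfolding EE_def using e by (simp add: field_simps)
  then have "cmod (EE e t - complex_of_real t) = cmod (iexp (e*t) - (1 + \<i> * complex_of_real (e*t))) / e"
    by (simp add: norm_divide ne)
  also have "\<dots> \<le> ((e*t)^2 / 2) / e" using a1 e by (intro divide_right_mono) auto
  also have "\<dots> = e * (t^2 / 2)" using e by (simp add: power2_eq_square)
  also have "\<dots> \<le> e * 1"
  proof -
    have "t^2 \<le> 1" using t by (simp add: power_le_one)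
    then show ?thesis using e by (intro mult_left_mono) auto
  qed
  finally show "cmod (EE e t - complex_of_real t) \<le> e" by simp
qed

definition MM :: "nat \<Rightarrow> real" where "MM n = (\<Sum>k<n. \<bar>cc n k\<bar> * real k)"
definition BB :: "nat \<Rightarrow> real" where "BB n = (\<Sum>k<n. \<bar>cc n k\<bar>)"

lemma FF_close:
  assumes e: "0 < e" and t: "0 \<le> t" "t \<le> 1"
  shows "cmod (FF n e t - complex_of_real (PP n t)) \<le> e * MM n"
proof -
  have "FF n e t - complex_of_real (PP n t) = (\<Sum>k<n. complex_of_real (cc n k) * (EE e t ^ k - complex_of_real t ^ k))"
    by (simp add: FF_def PP_def sum_subtractf algebra_simps)
  also have "cmod \<dots> \<le> (\<Sum>k<n. cmod (complex_of_real (cc n k) * (EE e t ^ k - complex_of_real t ^ k)))"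
    by (rule norm_sum)
  also have "\<dots> \<le> (\<Sum>k<n. \<bar>cc n k\<bar> * (real k * e))"
  proof (intro sum_mono)
    fix k
    have "cmod (EE e t ^ k - complex_of_real t ^ k) \<le> real k * cmod (EE e t - complex_of_real t)"
      using EE_bounds(1)[OF assms] t by (intro norm_power_diff) auto
    also have "\<dots> \<le> real k * e" using EE_bounds(2)[OF assms] by (intro mult_left_mono) auto
    finally show "cmod (complex_of_real (cc n k) * (EE e t ^ k - complex_of_real t ^ k)) \<le> \<bar>cc n k\<bar> * (real k * e)"
      by (simp add: norm_mult mult_left_mono)
  qed
  also have "\<dots> = e * MM n" by (simp add: MM_def sum_distrib_left algebra_simps)
  finally show ?thesis .
qed

lemma PP_bound:
  assumes t: "0 \<le> t" "t \<le> 1"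
  shows "\<bar>PP n t\<bar> \<le> BB n"
proof -
  have "\<bar>PP n t\<bar> \<le> (\<Sum>k<n. \<bar>cc n k * t^k\<bar>)" unfolding PP_def by (rule sum_abs)
  also have "\<dots> \<le> BB n" unfolding BB_def
  proof (intro sum_mono)
    fix k
    have "\<bar>t^k\<bar> \<le> 1" using t by (simp add: power_le_one)
    then show "\<bar>cc n k * t^k\<bar> \<le> \<bar>cc n k\<bar>" by (simp add: abs_mult mult_left_le)
  qed
  finally show ?thesis .
qed

lemma sq_close:
  assumes e: "0 < e" "e \<le> 1" and t: "0 \<le> t" "t \<le> 1"
  shows "\<bar>(cmod (FF n e t))^2 - (PP n t)^2\<bar> \<le> e * (MM n * (2 * BB n + MM n))"
proof -
  define a where "a = cmod (FF n e t)"
  define b where "b = \<bar>PP n t\<bar>"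
  have M0: "MM n \<ge> 0" unfolding MM_def by (intro sum_nonneg) auto
  have ab: "\<bar>a - b\<bar> \<le> e * MM n"
  proof -
    have "\<bar>a - b\<bar> \<le> cmod (FF n e t - complex_of_real (PP n t))"
      unfolding a_def b_def using norm_triangle_ineq3[of "FF n e t" "complex_of_real (PP n t)"] by simp
    then show ?thesis using FF_close[OF e(1) t, of n] by linarith
  qed
  have bB: "b \<le> BB n" using PP_bound[OF t] b_def by simp
  have b0: "b \<ge> 0" by (simp add: b_def)
  have a0: "a \<ge> 0" by (simp add: a_def)
  have eM: "e * MM n \<le> MM n" using e M0 by (simp add: mult_left_le_one_le)
  have "a + b \<le> 2 * BB n + MM n" using ab bB eM by linarith
  have "\<bar>a^2 - b^2\<bar> = \<bar>a - b\<bar> * (a + b)" proof -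
    have "a^2 - b^2 = (a - b) * (a + b)" by (simp add: power2_eq_square algebra_simps)
    then show ?thesis using a0 b0 by (simp add: abs_mult)
  qed
  also have "\<dots> \<le> (e * MM n) * (2 * BB n + MM n)"
    using ab \<open>a + b \<le> 2 * BB n + MM n\<close> a0 b0 e M0 by (intro mult_mono) auto
  finally show ?thesis by (simp add: a_def b_def power2_abs mult.assoc)
qed


lemma FF_mem:
  assumes e: "0 < e"
  shows "FF n e \<in> exp_sums n"
proof -
  define z where "z = \<i> * complex_of_real e"
  define a where "a j = (\<Sum>k<n. complex_of_real (cc n k) *
      ((if j \<le> k then of_nat (k choose j) * (-1)^(k-j) else 0) / z^k))" for j
  define lam where "lam j = e * real j" for j
  have sm: "strict_mono_on {..<n} lam"
    by (rule strict_mono_onI) (use e in \<open>simp add: lam_def\<close>)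
  have "FF n e t = (\<Sum>j<n. a j * exp (\<i> * complex_of_real (lam j * t)))" for t
  proof -
    define x where "x = exp (\<i> * complex_of_real (e * t))"
    have xj: "exp (\<i> * complex_of_real (lam j * t)) = x ^ j" for j
    proof -
      have "\<i> * complex_of_real (lam j * t) = of_nat j * (\<i> * complex_of_real (e * t))"
        by (simp add: lam_def)
      then show ?thesis unfolding x_def by (metis exp_of_nat_mult)
    qed
    have Ek: "EE e t ^ k = (\<Sum>j<n. ((if j \<le> k then of_nat (k choose j) * (-1)^(k-j) else 0) / z^k) * x^j)"
      if k: "k < n" for k
    proof -
      have "EE e t ^ k = (x + (-1))^k / z^k" by (simp add: EE_def x_def z_def power_divide)
      also have "\<dots> = (\<Sum>j\<le>k. of_nat (k choose j) * x^j * (-1)^(k-j)) / z^k"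
        using binomial_ring[of x "-1" k] by simp
      also have "\<dots> = (\<Sum>j\<le>k. ((of_nat (k choose j) * (-1)^(k-j)) / z^k) * x^j)"
        by (simp add: sum_divide_distrib algebra_simps)
      also have "\<dots> = (\<Sum>j<n. ((if j \<le> k then of_nat (k choose j) * (-1)^(k-j) else 0) / z^k) * x^j)"
      proof -
        have "(\<Sum>j<n. ((if j \<le> k then of_nat (k choose j) * (-1)^(k-j) else 0) / z^k) * x^j)
            = (\<Sum>j\<in>{..<n} \<inter> {j. j \<le> k}. ((of_nat (k choose j) * (-1)^(k-j)) / z^k) * x^j)"
          by (simp add: sum.inter_restrict) (intro sum.cong refl, simp)
        also have "{..<n} \<inter> {j. j \<le> k} = {..k}" using k by auto
        finally show ?thesis by simp
      qed
      finally show ?thesis .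
    qed
    have "FF n e t = (\<Sum>k<n. \<Sum>j<n. complex_of_real (cc n k) * (((if j \<le> k then of_nat (k choose j) * (-1)^(k-j) else 0) / z^k) * x^j))"
      unfolding FF_def by (intro sum.cong refl) (simp add: Ek sum_distrib_left)
    also have "\<dots> = (\<Sum>j<n. \<Sum>k<n. complex_of_real (cc n k) * (((if j \<le> k then of_nat (k choose j) * (-1)^(k-j) else 0) / z^k) * x^j))"
      by (rule sum.swap)
    also have "\<dots> = (\<Sum>j<n. a j * x^j)"
      unfolding a_def by (simp add: sum_distrib_right mult.assoc)
    finally show ?thesis by (simp only: xj)
  qed
  then have "FF n e = (\<lambda>t. \<Sum>j<n. a j * exp (\<i> * complex_of_real (lam j * t)))" by auto
  then show ?thesis unfolding exp_sums_def using sm by blast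
qed

lemma FF_zero:
  assumes "n \<ge> 1"
  shows "FF n e 0 = complex_of_real ((real n)^2)"
proof -
  have "FF n e 0 = (\<Sum>k<n. complex_of_real (cc n k) * 0 ^ k)" by (simp add: FF_def EE_def)
  also have "\<dots> = (\<Sum>k<n. if k = 0 then complex_of_real (cc n k) else 0)"
    by (intro sum.cong refl) simp
  also have "\<dots> = complex_of_real (cc n 0)" using assms by (simp add: sum.delta)
  finally show ?thesis by (simp add: cc_def power2_eq_square)
qed


lemma FF_cont: "e \<noteq> 0 \<Longrightarrow> continuous_on S (FF n e)"
  unfolding FF_def EE_def by (intro continuous_intros) auto

lemma approx_exists:
  assumes n: "n \<ge> 1" and r: "r < real n"
  shows "\<exists>f\<in>exp_sums n - {(\<lambda>_. 0)}. r < cmod (f 0) / L2_01 f"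
proof -
  define N where "N = (real n)^2"
  have N1: "N \<ge> 1" using n by (simp add: N_def)
  define K where "K = MM n * (2 * BB n + MM n)"
  have M0: "MM n \<ge> 0" unfolding MM_def by (intro sum_nonneg) auto
  have B0: "BB n \<ge> 0" unfolding BB_def by (intro sum_nonneg) auto
  have K0: "K \<ge> 0" using M0 B0 by (simp add: K_def)
  define s where "s = (max r 0 + real n) / 2"
  have s0: "s > 0" and sn: "s < real n" and rs: "r < s" using r n by (auto simp: s_def)
  define d where "d = N * (real n / s)^2 - N"
  have "real n / s > 1" using s0 sn by simp
  then have "(real n / s)^2 > 1" by (simp add: one_less_power)
  then have d0: "d > 0" using N1 by (simp add: d_def)
  define D where "D = min d (N/2)"
  have D0: "D > 0" using d0 N1 by (simp add: D_def)
  define e where "e = min 1 (D / (K + 1))"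
  have e0: "e > 0" and e1: "e \<le> 1" using D0 K0 by (auto simp: e_def)
  have eK: "e * K \<le> D"
  proof -
    have "e * K \<le> (D / (K + 1)) * K" using K0 by (intro mult_right_mono) (auto simp: e_def)
    also have "\<dots> \<le> D" using K0 D0 by (simp add: field_simps)
    finally show ?thesis .
  qed
  define g where "g t = (cmod (FF n e t))^2" for t
  have gc: "continuous_on {0..1} g" unfolding g_def by (intro continuous_intros FF_cont) (use e0 in simp)
  define I where "I = integral {0..1} g"
  have gI: "(g has_integral I) {0..1}" unfolding I_def using gc integrable_continuous_interval by blast
  have PPI: "((\<lambda>t. (PP n t)^2) has_integral N) {0..1}" unfolding N_def by (rule PP_sq_integral[OF n])
  have up: "((\<lambda>t. (PP n t)^2 + e*K) has_integral (N + e*K)) {0..1}"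
    using has_integral_add[OF PPI has_integral_const_real[of "e*K" 0 1]] by simp
  have lo: "((\<lambda>t. (PP n t)^2 - e*K) has_integral (N - e*K)) {0..1}"
    using has_integral_diff[OF PPI has_integral_const_real[of "e*K" 0 1]] by simp
  have close: "\<bar>g t - (PP n t)^2\<bar> \<le> e * K" if "t \<in> {0..1}" for t
    using sq_close[OF e0 e1, of t n] that by (simp add: g_def K_def)
  have Iup: "I \<le> N + e*K"
    by (rule has_integral_le[OF gI up]) (use close in \<open>force simp: abs_le_iff\<close>)
  have Ilo: "N - e*K \<le> I"
    by (rule has_integral_le[OF lo gI]) (use close in \<open>force simp: abs_le_iff\<close>)
  have I0: "I > 0" using Ilo eK N1 by (simp add: D_def)
  have Id: "I \<le> N + d" using Iup eK by (simp add: D_def)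
  have f0: "cmod (FF n e 0) = N" using FF_zero[OF n, of e] by (simp add: N_def norm_power)
  have L2: "L2_01 (FF n e) = sqrt I" by (simp add: L2_01_def I_def g_def[abs_def])
  have sq: "sqrt (N + d) = real n * (real n / s)"
  proof -
    have "N + d = (real n * (real n / s))^2" by (simp add: d_def N_def power_mult_distrib power_divide)
    then show ?thesis using s0 by simp
  qed
  have "real n > 0" using n by simp
  then have "N / sqrt (N + d) = s" unfolding sq using s0 by (simp add: N_def power2_eq_square field_simps)
  moreover have "N / sqrt (N + d) \<le> N / sqrt I"
    using I0 Id N1 by (intro divide_left_mono) (auto intro: real_sqrt_le_mono)
  ultimately have "r < cmod (FF n e 0) / L2_01 (FF n e)" using rs f0 L2 by simp
  moreover have "FF n e \<in> exp_sums n" by (rule FF_mem[OF e0])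
  moreover have "FF n e \<noteq> (\<lambda>_. 0)"
  proof
    assume "FF n e = (\<lambda>_. 0)"
    then have "FF n e 0 = 0" by simp
    then show False using f0 N1 by simp
  qed
  ultimately show ?thesis by blast
qed

theorem theorem2p6:
  fixes n :: nat
  assumes "n \<ge> 1"
  shows "ereal (real n) \<le>
    (SUP f \<in> exp_sums n - {(\<lambda>_. 0)}. ereal (cmod (f 0) / L2_01 f))"
proof (subst le_SUP_iff, intro allI impI)
  fix y assume y: "y < ereal (real n)"
  show "\<exists>i\<in>exp_sums n - {\<lambda>_. 0}. y < ereal (cmod (i 0) / L2_01 i)"
  proof (cases y)
    case (real r)
    then have "r < real n" using y by simp
    then obtain f where "f \<in> exp_sums n - {\<lambda>_. 0}" "r < cmod (f 0) / L2_01 f"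
      using approx_exists[OF assms] by blast
    then show ?thesis using real by auto
  next
    case PInf then show ?thesis using y by simp
  next
    case MInf
    obtain f where "f \<in> exp_sums n - {\<lambda>_. 0}" "0 < cmod (f 0) / L2_01 f"
      using approx_exists[OF assms, of 0] assms by force
    then show ?thesis using MInf by auto
  qed
qed

end
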